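(* Let $S$ be a right non-degenerate semigroup of skew type with generating set $X$. Then for every $y_1\in X$ and every $m\ge 2$, the map $f_{y_1}:X^{m-1}\to X^{m-1}$ is injective.
   Context: A semigroup of skew type is a monoid $S$ with a monoid presentation $S=\langle x_1,\ldots,x_n \mid x_ix_j=x_kx_l\rangle$ consisting of $\binom{n}{2}$ relations, each of the form $x_ix_j=x_kx_l$ with $i\neq j$, $k\neq l$, such that every word $x_px_q$ with $p\neq q$ appears (as one side) in exactly one of the relations; $X=\{x_1,\ldots,x_n\}$. For $a,b\in X$ define the partner $\overline{a}\,\overline{b}$ of the word $ab$: if $a\neq b$, it is the other side of the unique defining relation containing $ab$; if $a=b$, it is $ab$ itself. $S$ is right non-degenerate if for every $x\in X$ the map $X\to X$ sending $y$ to the first letter of the partner of $xy$ is surjective (equivalently: for every $x,z\in X$ there is a relation $xy=zt$, allowing the trivial one $xx=xx$). Let $Y$ be the free monoid on $X$ and $X^{m-1}\subseteq Y$ the set of words of length $m-1$. For $m\ge2$ and $y_1,\ldots,y_m\in X$, define $g_i(y_1\cdots y_m)=y_1\cdots y_{i-1}\overline{y}_i\overline{y}_{i+1}y_{i+2}\cdots y_m$ for $1\le i\le m-1$, where $\overline{y}_i\overline{y}_{i+1}$ is the partner of $y_iy_{i+1}$, and $g(y_1\cdots y_m)=g_{m-1}\cdots g_2g_1(y_1\cdots y_m)$. If $g(y_1\cdots y_m)=s_1\cdots s_m$ with $s_i\in X$, set $f_{y_1}(y_2\cdots y_m)=s_1\cdots s_{m-1}$. *)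

theory Defs
  imports Main
begin

text \<open>A monoid presentation of skew type over the (finite) generating set X is
given by its set R of defining relations; a relation x_i x_j = x_k x_l is the pair
((x_i,x_j),(x_k,x_l)) of two-letter words.\<close>

definition skew_type :: "'a set \<Rightarrow> (('a \<times> 'a) \<times> ('a \<times> 'a)) set \<Rightarrow> bool" where
  "skew_type X R \<longleftrightarrow> finite X \<and> finite R \<and> card R = (card X choose 2)
     \<and> (\<forall>((i,j),(k,l))\<in>R. i \<in> X \<and> j \<in> X \<and> k \<in> X \<and> l \<in> X \<and> i \<noteq> j \<and> k \<noteq> l)
     \<and> (\<forall>p\<in>X. \<forall>q\<in>X. p \<noteq> q \<longrightarrow> (\<exists>!r\<in>R. fst r = (p,q) \<or> snd r = (p,q)))"

definition partner :: "(('a \<times> 'a) \<times> ('a \<times> 'a)) set \<Rightarrow> 'a \<times> 'a \<Rightarrow> 'a \<times> 'a" where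
  "partner R w = (if fst w = snd w then w
     else (THE v. (w, v) \<in> R \<or> (v, w) \<in> R))"

definition right_nondegenerate :: "'a set \<Rightarrow> (('a \<times> 'a) \<times> ('a \<times> 'a)) set \<Rightarrow> bool" where
  "right_nondegenerate X R \<longleftrightarrow> (\<forall>x\<in>X. (\<lambda>y. fst (partner R (x, y))) ` X = X)"

text \<open>g_i (1-based index i, 1 \<le> i \<le> m-1) replaces letters i, i+1 by the partner.\<close>
definition gstep :: "(('a \<times> 'a) \<times> ('a \<times> 'a)) set \<Rightarrow> nat \<Rightarrow> 'a list \<Rightarrow> 'a list" where
  "gstep R i ys = (let (a, b) = partner R (ys ! (i - 1), ys ! i) in ys[i - 1 := a, i := b])"

definition gmap :: "(('a \<times> 'a) \<times> ('a \<times> 'a)) set \<Rightarrow> 'a list \<Rightarrow> 'a list" where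
  "gmap R ys = foldl (\<lambda>w i. gstep R i w) ys [1..<length ys]"

definition fmap :: "(('a \<times> 'a) \<times> ('a \<times> 'a)) set \<Rightarrow> 'a \<Rightarrow> 'a list \<Rightarrow> 'a list" where
  "fmap R y ws = butlast (gmap R (y # ws))"

end

theory Submission
  imports Defs
begin

fun gr :: "(('a \<times> 'a) \<times> ('a \<times> 'a)) set \<Rightarrow> 'a \<Rightarrow> 'a list \<Rightarrow> 'a list" where
  "gr R x [] = [x]"
| "gr R x (y # ys) = fst (partner R (x, y)) # gr R (snd (partner R (x, y))) ys"

lemma gr_len: "length (gr R x ws) = Suc (length ws)"
  by (induction ws arbitrary: x) auto

lemma fold_gr:
  "foldl (\<lambda>w i. gstep R i w) (p @ x # ws) [Suc (length p)..<Suc (length p) + length ws]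
     = p @ gr R x ws"
proof (induction ws arbitrary: p x)
  case Nil
  then show ?case by simp
next
  case (Cons y ws)
  obtain s t where st: "partner R (x, y) = (s, t)" by (cases "partner R (x, y)") auto
  have up: "[Suc (length p)..<Suc (length p) + length (y # ws)]
      = Suc (length p) # [Suc (length (p @ [s]))..<Suc (length (p @ [s])) + length ws]"
    by (simp add: upt_conv_Cons del: upt_Suc)
  have gs: "gstep R (Suc (length p)) (p @ x # y # ws) = (p @ [s]) @ t # ws"
    using st by (simp add: gstep_def nth_append list_update_append)
  show ?case
    using Cons.IH[of "p @ [s]" t] st by (simp only: up foldl_Cons gs) simp
qed

lemma gmap_gr: "gmap R (x # ws) = gr R x ws"
  using fold_gr[of R "[]" x ws] by (simp add: gmap_def)

lemma pair_aux: "(r1::('a\<times>'a)\<times>('a\<times>'a)) = r2 \<Longrightarrow> r1 = ((x,y),v) \<or> r1 = (v,(x,y)) \<Longrightarrow> r2 = ((x,y),v') \<or> r2 = (v',(x,y)) \<Longrightarrow> v' = v"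
  by (elim disjE) simp_all

lemma partner_snd_in:
  assumes "skew_type X R" "x \<in> X" "y \<in> X"
  shows "snd (partner R (x, y)) \<in> X"
proof (cases "x = y")
  case True
  then show ?thesis using assms by (simp add: partner_def)
next
  case False
  from assms(1) have comp: "\<forall>((i,j),(k,l))\<in>R. i \<in> X \<and> j \<in> X \<and> k \<in> X \<and> l \<in> X"
    unfolding skew_type_def by (elim conjE) (fastforce split: prod.splits)
  from assms(1) have eu0: "\<forall>p\<in>X. \<forall>q\<in>X. p \<noteq> q \<longrightarrow> (\<exists>!r\<in>R. fst r = (p,q) \<or> snd r = (p,q))"
    unfolding skew_type_def by (elim conjE) assumption
  have eu: "\<exists>!r\<in>R. fst r = (x,y) \<or> snd r = (x,y)"
    using eu0[rule_format, OF assms(2) assms(3) False] .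
  then obtain r where r: "r \<in> R" "fst r = (x,y) \<or> snd r = (x,y)" by auto
  then obtain v where v: "((x,y), v) \<in> R \<or> (v, (x,y)) \<in> R"
    by (cases r) auto
  have uniq: "v' = v" if hv: "((x,y), v') \<in> R \<or> (v', (x,y)) \<in> R" for v'
  proof -
    obtain r1 where r1: "r1 \<in> R" "fst r1 = (x,y) \<or> snd r1 = (x,y)" "r1 = ((x,y), v) \<or> r1 = (v, (x,y))"
      using v by (metis fst_conv snd_conv)
    obtain r2 where r2: "r2 \<in> R" "fst r2 = (x,y) \<or> snd r2 = (x,y)" "r2 = ((x,y), v') \<or> r2 = (v', (x,y))"
      using hv by (metis fst_conv snd_conv)
    obtain r0 where all: "\<forall>r. r \<in> R \<and> (fst r = (x,y) \<or> snd r = (x,y)) \<longrightarrow> r = r0"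
      using eu by (elim ex1E) (rule that, assumption)
    have "r1 = r0" using mp[OF spec[OF all, of r1] conjI[OF r1(1,2)]] .
    moreover have "r2 = r0" using mp[OF spec[OF all, of r2] conjI[OF r2(1,2)]] .
    ultimately have "r1 = r2" by simp
    then show ?thesis using r1(3) r2(3) by (rule pair_aux)
  qed
  have th: "(THE v'. ((x,y),v') \<in> R \<or> (v',(x,y)) \<in> R) = v"
    by (rule the_equality) (rule v, rule uniq)
  have "partner R (x, y) = v"
    unfolding partner_def using False th by simp
  then show ?thesis using v comp by (cases v) auto
qed

lemma inj_fst:
  assumes "skew_type X R" "right_nondegenerate X R" "x \<in> X"
  shows "inj_on (\<lambda>y. fst (partner R (x, y))) X"
proof -
  have fin: "finite X" using assms(1) by (simp add: skew_type_def)
  have "(\<lambda>y. fst (partner R (x, y))) ` X = X" using assms(2,3) by (simp add: right_nondegenerate_def)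
  then show ?thesis using fin by (simp add: eq_card_imp_inj_on)
qed

lemma main_inj:
  assumes "skew_type X R" "right_nondegenerate X R"
  shows "x \<in> X \<Longrightarrow> set ws \<subseteq> X \<Longrightarrow> set vs \<subseteq> X \<Longrightarrow> length ws = length vs \<Longrightarrow>
    butlast (gr R x ws) = butlast (gr R x vs) \<Longrightarrow> ws = vs"
proof (induction ws arbitrary: x vs)
  case Nil
  then show ?case by simp
next
  case (Cons y ws)
  then obtain v vs' where vs: "vs = v # vs'" by (cases vs) auto
  have ne1: "gr R (snd (partner R (x, y))) ws \<noteq> []" by (metis gr_len list.size(3) nat.simps(3))
  have ne2: "gr R (snd (partner R (x, v))) vs' \<noteq> []" by (metis gr_len list.size(3) nat.simps(3))
  from Cons.prems(5) have e1: "fst (partner R (x, y)) = fst (partner R (x, v))"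
    and e2: "butlast (gr R (snd (partner R (x, y))) ws) = butlast (gr R (snd (partner R (x, v))) vs')"
    using ne1 ne2 by (simp_all add: vs)
  have "y = v" using inj_fst[OF assms Cons.prems(1)] e1 Cons.prems vs
    by (auto dest: inj_onD)
  moreover have "ws = vs'"
    using Cons.IH[of "snd (partner R (x, y))" vs'] e2 Cons.prems vs \<open>y = v\<close>
      partner_snd_in[OF assms(1) Cons.prems(1), of y] by auto
  ultimately show ?case using vs by simp
qed

theorem lemma4p1:
  fixes X :: "'a set" and R :: "(('a \<times> 'a) \<times> ('a \<times> 'a)) set"
  assumes "skew_type X R" and "right_nondegenerate X R"
    and "y1 \<in> X" and "(m::nat) \<ge> 2"
  shows "inj_on (fmap R y1) {ws. length ws = m - 1 \<and> set ws \<subseteq> X}"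
  by (rule inj_onI) (auto simp: fmap_def gmap_gr intro: main_inj[OF assms(1,2) assms(3)])

end
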